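(* Let $s\ge 1$ be an integer, let $(G,Z)$ be a plantation, let $F=G\setminus Z$, and let $N$ be the set of vertices of $V(G)\setminus Z$ with a neighbour in $Z$. Suppose that every component of $F$ contains at least two vertices of $N$. Then there is a normal set $\mathcal{S}$ of transitions of $(G,Z)$ with $|\mathcal{S}|\ge |N|/4$.
   Context: Graphs are finite and simple. Two subgraphs are anticomplete if their vertex sets are disjoint and no edge joins them. $G$ is $s\mathcal{O}$-free if no $s$ cycles of $G$ are pairwise vertex-disjoint and pairwise anticomplete. $Z\subseteq V(G)$ is cycle-hitting if every cycle of $G$ has a vertex in $Z$. A plantation is a pair $(G,Z)$ with $G$ an $s\mathcal{O}$-free graph and $Z$ cycle-hitting. A transition of $(G,Z)$ is a path of $F$ of length at least one with both ends in $N$ and no internal vertex in $N$. A set $\mathcal{S}$ of transitions is normal if (i) for all distinct $P,Q\in\mathcal{S}$, either $P,Q$ are anticomplete or $P,Q$ have a common end, and (ii) each $P\in\mathcal{S}$ has an edge that belongs to no other member of $\mathcal{S}$. *)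

theory Defs
  imports Complex_Main
begin

definition simple_graph :: "'a set \<Rightarrow> ('a \<Rightarrow> 'a \<Rightarrow> bool) \<Rightarrow> bool" where
  "simple_graph V adj \<longleftrightarrow> finite V \<and>
     (\<forall>u v. adj u v \<longrightarrow> u \<in> V \<and> v \<in> V \<and> u \<noteq> v) \<and>
     (\<forall>u v. adj u v \<longleftrightarrow> adj v u)"

definition is_cycle :: "'a set \<Rightarrow> ('a \<Rightarrow> 'a \<Rightarrow> bool) \<Rightarrow> 'a list \<Rightarrow> bool" where
  "is_cycle V adj xs \<longleftrightarrow> length xs \<ge> 3 \<and> distinct xs \<and> set xs \<subseteq> V \<and>
     (\<forall>i < length xs - 1. adj (xs ! i) (xs ! (i + 1))) \<and> adj (last xs) (hd xs)"

definition is_path :: "'a set \<Rightarrow> ('a \<Rightarrow> 'a \<Rightarrow> bool) \<Rightarrow> 'a list \<Rightarrow> bool" where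
  "is_path V adj xs \<longleftrightarrow> xs \<noteq> [] \<and> distinct xs \<and> set xs \<subseteq> V \<and>
     (\<forall>i < length xs - 1. adj (xs ! i) (xs ! (i + 1)))"

definition path_edges :: "'a list \<Rightarrow> 'a set set" where
  "path_edges xs = {{xs ! i, xs ! (i + 1)} | i. i < length xs - 1}"

definition path_ends :: "'a list \<Rightarrow> 'a set" where
  "path_ends xs = {hd xs, last xs}"

definition anticomplete :: "('a \<Rightarrow> 'a \<Rightarrow> bool) \<Rightarrow> 'a set \<Rightarrow> 'a set \<Rightarrow> bool" where
  "anticomplete adj A B \<longleftrightarrow> A \<inter> B = {} \<and> (\<forall>a\<in>A. \<forall>b\<in>B. \<not> adj a b)"

definition sO_free :: "nat \<Rightarrow> 'a set \<Rightarrow> ('a \<Rightarrow> 'a \<Rightarrow> bool) \<Rightarrow> bool" where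
  "sO_free s V adj \<longleftrightarrow> \<not> (\<exists>C :: nat \<Rightarrow> 'a list.
      (\<forall>i<s. is_cycle V adj (C i)) \<and>
      (\<forall>i<s. \<forall>j<s. i \<noteq> j \<longrightarrow> anticomplete adj (set (C i)) (set (C j))))"

definition cycle_hitting :: "'a set \<Rightarrow> ('a \<Rightarrow> 'a \<Rightarrow> bool) \<Rightarrow> 'a set \<Rightarrow> bool" where
  "cycle_hitting V adj Z \<longleftrightarrow> Z \<subseteq> V \<and> (\<forall>xs. is_cycle V adj xs \<longrightarrow> set xs \<inter> Z \<noteq> {})"

definition plantation :: "nat \<Rightarrow> 'a set \<Rightarrow> ('a \<Rightarrow> 'a \<Rightarrow> bool) \<Rightarrow> 'a set \<Rightarrow> bool" where
  "plantation s V adj Z \<longleftrightarrow> simple_graph V adj \<and> sO_free s V adj \<and> cycle_hitting V adj Z"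

definition adjF :: "('a \<Rightarrow> 'a \<Rightarrow> bool) \<Rightarrow> 'a set \<Rightarrow> 'a \<Rightarrow> 'a \<Rightarrow> bool" where
  "adjF adj Z u v \<longleftrightarrow> adj u v \<and> u \<notin> Z \<and> v \<notin> Z"

definition attach :: "'a set \<Rightarrow> ('a \<Rightarrow> 'a \<Rightarrow> bool) \<Rightarrow> 'a set \<Rightarrow> 'a set" where
  "attach V adj Z = {v \<in> V - Z. \<exists>z\<in>Z. adj v z}"

definition transition :: "'a set \<Rightarrow> ('a \<Rightarrow> 'a \<Rightarrow> bool) \<Rightarrow> 'a set \<Rightarrow> 'a list \<Rightarrow> bool" where
  "transition V adj Z xs \<longleftrightarrow> is_path (V - Z) (adjF adj Z) xs \<and> length xs \<ge> 2 \<and>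
     hd xs \<in> attach V adj Z \<and> last xs \<in> attach V adj Z \<and>
     (\<forall>i. 0 < i \<and> i < length xs - 1 \<longrightarrow> xs ! i \<notin> attach V adj Z)"

definition normal_set :: "('a \<Rightarrow> 'a \<Rightarrow> bool) \<Rightarrow> 'a list set \<Rightarrow> bool" where
  "normal_set adj S \<longleftrightarrow>
     (\<forall>P\<in>S. \<forall>Q\<in>S. P \<noteq> Q \<longrightarrow>
        anticomplete adj (set P) (set Q) \<or> path_ends P \<inter> path_ends Q \<noteq> {}) \<and>
     (\<forall>P\<in>S. \<exists>e\<in>path_edges P. \<forall>Q\<in>S. Q \<noteq> P \<longrightarrow> e \<notin> path_edges Q)"

end

theory Submission
  imports Defs
begin


lemma path_rtc:
  assumes "\<forall>i < length xs - 1. E (xs ! i) (xs ! (i + 1))" "i < length xs"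
  shows "E\<^sup>*\<^sup>* (xs ! 0) (xs ! i)"
  using assms(2)
proof (induction i)
  case 0 then show ?case by simp
next
  case (Suc i)
  then have "E (xs ! i) (xs ! Suc i)" using assms(1) by auto
  with Suc show ?case by (meson Suc_lessD rtranclp.rtrancl_into_rtrancl)
qed

lemma path_snoc:
  assumes "is_path W E xs" "y \<in> W" "y \<notin> set xs" "E (last xs) y"
  shows "is_path W E (xs @ [y])"
proof -
  have ne: "xs \<noteq> []" using assms(1) by (simp add: is_path_def)
  have "E ((xs @ [y]) ! i) ((xs @ [y]) ! (i + 1))" if "i < length (xs @ [y]) - 1" for i
  proof (cases "i + 1 < length xs")
    case True
    then show ?thesis using assms(1) by (auto simp: is_path_def nth_append)
  next
    case False
    then have "i = length xs - 1" using that by simp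
    then show ?thesis using assms(4) ne by (simp add: nth_append last_conv_nth)
  qed
  then show ?thesis using assms ne by (auto simp: is_path_def)
qed

lemma path_drop_cycle:
  assumes "is_path W E xs" "i + 2 < length xs" "E (last xs) (xs ! i)"
  shows "is_cycle W E (drop i xs)"
proof -
  have "E (drop i xs ! j) (drop i xs ! (j + 1))" if "j < length (drop i xs) - 1" for j
    using assms(1) that assms(2) by (auto simp: is_path_def nth_drop)
  moreover have "last (drop i xs) = last xs" using assms(2) by simp
  moreover have "hd (drop i xs) = xs ! i" using assms(2) by (simp add: hd_drop_conv_nth)
  ultimately show ?thesis using assms
    by (auto simp: is_cycle_def is_path_def dest: in_set_dropD)
qed

lemma exists_leaf:
  assumes fin: "finite W"
    and Ein: "\<forall>u v. E u v \<longrightarrow> u \<in> W \<and> v \<in> W \<and> u \<noteq> v"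
    and Esym: "\<forall>u v. E u v \<longleftrightarrow> E v u"
    and acyc: "\<forall>xs. \<not> is_cycle W E xs"
    and RW: "R \<subseteq> W" "r0 \<in> R"
    and Runiq: "\<forall>r\<in>R. \<forall>r'\<in>R. E\<^sup>*\<^sup>* r r' \<longrightarrow> r = r'"
    and nb: "\<forall>v\<in>W. \<exists>u. E v u"
  shows "\<exists>l\<in>W - R. \<exists>p. \<forall>u. E l u \<longleftrightarrow> u = p"
proof -
  let ?L = "{length xs | xs. is_path W E xs \<and> hd xs \<in> R}"
  have bound: "\<forall>n\<in>?L. n \<le> card W"
  proof
    fix n assume "n \<in> ?L"
    then obtain xs where "n = length xs" "is_path W E xs" by auto
    then show "n \<le> card W" unfolding is_path_def
      by (metis card_mono distinct_card fin)
  qed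
  have finL: "finite ?L"
    using bound by (meson finite_nat_set_iff_bounded_le)
  have p0: "is_path W E [r0]" using RW by (auto simp: is_path_def)
  hence "1 \<in> ?L" using RW by force
  hence "Max ?L \<in> ?L" using Max_in[OF finL] by blast
  then obtain xs where xs: "is_path W E xs" "hd xs \<in> R" "length xs = Max ?L"
    by auto
  have maxl: "length ys \<le> length xs" if "is_path W E ys" "hd ys \<in> R" for ys
    using Max_ge[OF finL] xs(3) that by force
  define x where "x = last xs"
  have xsne: "xs \<noteq> []" using xs(1) by (simp add: is_path_def)
  have xlast: "x = xs ! (length xs - 1)" using xsne by (simp add: x_def last_conv_nth)
  have ext: "y \<in> set xs" if "E x y" for y
  proof (rule ccontr)
    assume "y \<notin> set xs"
    moreover have "y \<in> W" using Ein that by blast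
    moreover have "E (last xs) y" using that x_def by simp
    ultimately have "is_path W E (xs @ [y])" using path_snoc[OF xs(1)] by blast
    moreover have "hd (xs @ [y]) = hd xs" using xsne by simp
    ultimately have "length (xs @ [y]) \<le> length xs" using maxl xs(2) by metis
    then show False by simp
  qed
  have nocyc: "y = xs ! (length xs - 2)" if exy: "E x y" for y
  proof -
    obtain i where i: "i < length xs" "xs ! i = y" using ext[OF exy] by (auto simp: in_set_conv_nth)
    have "i \<noteq> length xs - 1" using Ein exy xlast i by auto
    moreover have "\<not> i + 2 < length xs"
    proof
      assume "i + 2 < length xs"
      moreover have "E (last xs) (xs ! i)" using exy i x_def by simp
      ultimately have "is_cycle W E (drop i xs)" using path_drop_cycle[OF xs(1)] by blast
      with acyc show False by auto
    qed
    ultimately have "i = length xs - 2" using i(1) by linarith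
    then show ?thesis using i(2) by simp
  qed
  have xW: "x \<in> W" using xs(1) xsne by (auto simp: is_path_def x_def)
  have len2: "length xs \<ge> 2"
  proof (rule ccontr)
    assume "\<not> length xs \<ge> 2"
    moreover have "length xs \<noteq> 0" using xsne by simp
    ultimately have "length xs = 1" by linarith
    then have "set xs = {x}" using x_def by (cases xs) auto
    obtain y where "E x y" using nb xW by blast
    then have "y \<in> set xs" by (rule ext)
    then show False using \<open>E x y\<close> \<open>set xs = {x}\<close> Ein by (metis singletonD)
  qed
  have "x \<notin> R"
  proof
    assume "x \<in> R"
    have "E\<^sup>*\<^sup>* (xs ! 0) (xs ! (length xs - 1))"
      using path_rtc[of xs E "length xs - 1"] xs(1) xsne by (auto simp: is_path_def)
    then have "xs ! 0 = x" using Runiq xs(2) \<open>x \<in> R\<close> xlast xsne by (simp add: hd_conv_nth)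
    then show False using xs(1) len2 xlast by (auto simp: is_path_def nth_eq_iff_index_eq)
  qed
  moreover have "E x (xs ! (length xs - 2))"
  proof -
    have "E (xs ! (length xs - 2)) (xs ! (length xs - 2 + 1))"
      using xs(1) len2 by (auto simp: is_path_def)
    moreover have "length xs - 2 + 1 = length xs - 1" using len2 by simp
    ultimately show ?thesis using Esym xlast by metis
  qed
  ultimately show ?thesis using xW nocyc by blast
qed

lemma leaf_reach:
  assumes "E\<^sup>*\<^sup>* w x" "w \<noteq> l" "\<forall>u. E l u \<longleftrightarrow> u = p" "\<forall>u v. E u v \<longleftrightarrow> E v u" "p \<noteq> l"
  shows "((\<lambda>u v. E u v \<and> u \<noteq> l \<and> v \<noteq> l)\<^sup>*\<^sup>* w x \<and> x \<noteq> l) \<or>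
         (x = l \<and> (\<lambda>u v. E u v \<and> u \<noteq> l \<and> v \<noteq> l)\<^sup>*\<^sup>* w p)"
  using assms(1)
proof induction
  case base
  then show ?case using assms(2) by simp
next
  case (step x y)
  let ?E = "\<lambda>u v. E u v \<and> u \<noteq> l \<and> v \<noteq> l"
  from step.IH show ?case
  proof
    assume a: "?E\<^sup>*\<^sup>* w x \<and> x \<noteq> l"
    show ?thesis
    proof (cases "y = l")
      case True
      then have "x = p" using step.hyps(2) assms(3,4) by blast
      then show ?thesis using a True by simp
    next
      case False
      then have "?E x y" using a step.hyps(2) by simp
      have "?E\<^sup>*\<^sup>* w y"
        by (rule rtranclp.rtrancl_into_rtrancl[of ?E w x y]) (use a \<open>?E x y\<close> in auto)
      then show ?thesis using False by simp
    qed
  next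
    assume a: "x = l \<and> ?E\<^sup>*\<^sup>* w p"
    then have "y = p" using step.hyps(2) assms(3) by blast
    then show ?thesis using a assms(5) by simp
  qed
qed

lemma forest_struct:
  assumes "finite W"
  shows "\<forall>E R. (\<forall>u v. E u v \<longrightarrow> u \<in> W \<and> v \<in> W \<and> u \<noteq> v) \<longrightarrow> (\<forall>u v. E u v \<longleftrightarrow> E v u)
    \<longrightarrow> (\<forall>xs. \<not> is_cycle W E xs) \<longrightarrow> R \<subseteq> W \<longrightarrow> (\<forall>v\<in>W. \<exists>r\<in>R. E\<^sup>*\<^sup>* v r)
    \<longrightarrow> (\<forall>r\<in>R. \<forall>r'\<in>R. E\<^sup>*\<^sup>* r r' \<longrightarrow> r = r')
    \<longrightarrow> (\<exists>par dep. (\<forall>v\<in>W. (v \<in> R \<and> dep v = (0::nat)) \<or>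
                          (v \<notin> R \<and> E v (par v) \<and> dep v = Suc (dep (par v)))) \<and>
                    (\<forall>u v. E u v \<longrightarrow> (u \<notin> R \<and> par u = v) \<or> (v \<notin> R \<and> par v = u)))"
  using assms
proof (induction W rule: finite_psubset_induct)
  case (psubset W)
  show ?case
  proof (intro allI impI)
    fix E :: "'a \<Rightarrow> 'a \<Rightarrow> bool" and R
    assume Ein: "\<forall>u v. E u v \<longrightarrow> u \<in> W \<and> v \<in> W \<and> u \<noteq> v"
      and Esym: "\<forall>u v. E u v \<longleftrightarrow> E v u"
      and acyc: "\<forall>xs. \<not> is_cycle W E xs"
      and RW: "R \<subseteq> W"
      and reach: "\<forall>v\<in>W. \<exists>r\<in>R. E\<^sup>*\<^sup>* v r"
      and uniq: "\<forall>r\<in>R. \<forall>r'\<in>R. E\<^sup>*\<^sup>* r r' \<longrightarrow> r = r'"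
    show "\<exists>par dep. (\<forall>v\<in>W. (v \<in> R \<and> dep v = (0::nat)) \<or>
                          (v \<notin> R \<and> E v (par v) \<and> dep v = Suc (dep (par v)))) \<and>
                    (\<forall>u v. E u v \<longrightarrow> (u \<notin> R \<and> par u = v) \<or> (v \<notin> R \<and> par v = u))"
    proof (cases "W = {}")
      case True
      then show ?thesis using Ein by auto
    next
      case False
      then obtain w0 where "w0 \<in> W" by blast
      then obtain r0 where r0: "r0 \<in> R" using reach by blast
      show ?thesis
      proof (cases "\<exists>v\<in>W. \<forall>u. \<not> E v u")
        case True
        then obtain v where v: "v \<in> W" "\<forall>u. \<not> E v u" by blast
        have nov: "\<not> E u v" for u using v Esym by blast
        have vR: "v \<in> R"
        proof -
          obtain r where r: "r \<in> R" "E\<^sup>*\<^sup>* v r" using reach v by blast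
          from r(2) have "r = v" by (cases rule: converse_rtranclpE) (use v in auto)
          then show ?thesis using r by simp
        qed
        have sub: "W - {v} \<subset> W" using v by blast
        have Ein': "\<forall>u w. E u w \<longrightarrow> u \<in> W - {v} \<and> w \<in> W - {v} \<and> u \<noteq> w"
          using Ein v nov by blast
        have acyc': "\<forall>xs. \<not> is_cycle (W - {v}) E xs"
          using acyc by (auto simp: is_cycle_def)
        have RW': "R - {v} \<subseteq> W - {v}" using RW by blast
        have reach': "\<forall>w\<in>W - {v}. \<exists>r\<in>R - {v}. E\<^sup>*\<^sup>* w r"
        proof
          fix w assume w: "w \<in> W - {v}"
          then obtain r where r: "r \<in> R" "E\<^sup>*\<^sup>* w r" using reach by blast
          have "r \<noteq> v"
          proof
            assume "r = v"
            with r(2) w have "E\<^sup>*\<^sup>* w v" "w \<noteq> v" by auto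
            then show False by (cases rule: rtranclp.cases) (use nov in auto)
          qed
          then show "\<exists>r\<in>R - {v}. E\<^sup>*\<^sup>* w r" using r by blast
        qed
        have uniq': "\<forall>r\<in>R - {v}. \<forall>r'\<in>R - {v}. E\<^sup>*\<^sup>* r r' \<longrightarrow> r = r'" using uniq by blast
        obtain par dep where pd:
          "\<forall>x\<in>W - {v}. (x \<in> R - {v} \<and> dep x = (0::nat)) \<or>
                 (x \<notin> R - {v} \<and> E x (par x) \<and> dep x = Suc (dep (par x)))"
          "\<forall>u w. E u w \<longrightarrow> (u \<notin> R - {v} \<and> par u = w) \<or> (w \<notin> R - {v} \<and> par w = u)"
          using psubset.IH[OF sub, THEN spec, THEN spec, THEN mp, THEN mp, THEN mp, THEN mp, THEN mp, THEN mp, OF Ein' Esym acyc' RW' reach' uniq'] by blast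
        define dep' where "dep' = dep(v := 0)"
        have A: "\<forall>x\<in>W. (x \<in> R \<and> dep' x = 0) \<or> (x \<notin> R \<and> E x (par x) \<and> dep' x = Suc (dep' (par x)))"
        proof
          fix x assume x: "x \<in> W"
          show "(x \<in> R \<and> dep' x = 0) \<or> (x \<notin> R \<and> E x (par x) \<and> dep' x = Suc (dep' (par x)))"
          proof (cases "x = v")
            case True then show ?thesis using vR by (simp add: dep'_def)
          next
            case False
            then have "x \<in> W - {v}" using x by simp
            then have "(x \<in> R - {v} \<and> dep x = 0) \<or> (x \<notin> R - {v} \<and> E x (par x) \<and> dep x = Suc (dep (par x)))"
              using pd(1) by blast
            moreover have "E x (par x) \<Longrightarrow> par x \<noteq> v" using nov by blast
            ultimately show ?thesis using False by (auto simp: dep'_def)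
          qed
        qed
        have B: "\<forall>u w. E u w \<longrightarrow> (u \<notin> R \<and> par u = w) \<or> (w \<notin> R \<and> par w = u)"
        proof (intro allI impI)
          fix u w assume e: "E u w"
          then have "u \<noteq> v" "w \<noteq> v" using v nov by auto
          then show "(u \<notin> R \<and> par u = w) \<or> (w \<notin> R \<and> par w = u)" using pd(2) e by blast
        qed
        show ?thesis using A B by blast
      next
        case False
        then have nb: "\<forall>v\<in>W. \<exists>u. E v u" by blast
        obtain l p where lp: "l \<in> W - R" "\<forall>u. E l u \<longleftrightarrow> u = p"
          using exists_leaf[OF psubset.hyps(1) Ein Esym acyc RW r0 uniq nb] by blast
        have pl: "p \<noteq> l" using lp Ein by blast
        define E' where "E' = (\<lambda>u w. E u w \<and> u \<noteq> l \<and> w \<noteq> l)"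
        have sub: "W - {l} \<subset> W" using lp by blast
        have Ein': "\<forall>u w. E' u w \<longrightarrow> u \<in> W - {l} \<and> w \<in> W - {l} \<and> u \<noteq> w"
          using Ein by (auto simp: E'_def)
        have Esym': "\<forall>u w. E' u w \<longleftrightarrow> E' w u" using Esym by (auto simp: E'_def)
        have acyc': "\<forall>xs. \<not> is_cycle (W - {l}) E' xs"
          using acyc by (auto simp: is_cycle_def E'_def)
        have RW': "R \<subseteq> W - {l}" using RW lp by blast
        have reach': "\<forall>w\<in>W - {l}. \<exists>r\<in>R. E'\<^sup>*\<^sup>* w r"
        proof
          fix w assume w: "w \<in> W - {l}"
          then obtain r where r: "r \<in> R" "E\<^sup>*\<^sup>* w r" using reach by blast
          have "r \<noteq> l" using r lp by blast
          then have "E'\<^sup>*\<^sup>* w r"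
            using leaf_reach[OF r(2) _ lp(2) Esym pl] w unfolding E'_def by blast
          then show "\<exists>r\<in>R. E'\<^sup>*\<^sup>* w r" using r by blast
        qed
        have mono: "E'\<^sup>*\<^sup>* a b \<Longrightarrow> E\<^sup>*\<^sup>* a b" for a b
          by (rule rtranclp_mono[THEN predicate2D, rotated]) (auto simp: E'_def)
        have uniq': "\<forall>r\<in>R. \<forall>r'\<in>R. E'\<^sup>*\<^sup>* r r' \<longrightarrow> r = r'" using uniq mono by blast
        obtain par dep where pd:
          "\<forall>x\<in>W - {l}. (x \<in> R \<and> dep x = (0::nat)) \<or>
                 (x \<notin> R \<and> E' x (par x) \<and> dep x = Suc (dep (par x)))"
          "\<forall>u w. E' u w \<longrightarrow> (u \<notin> R \<and> par u = w) \<or> (w \<notin> R \<and> par w = u)"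
          using psubset.IH[OF sub, THEN spec, THEN spec, THEN mp, THEN mp, THEN mp, THEN mp, THEN mp, THEN mp, OF Ein' Esym' acyc' RW' reach' uniq'] by blast
        define dep' where "dep' = dep(l := Suc (dep p))"
        define par' where "par' = par(l := p)"
        have A: "\<forall>x\<in>W. (x \<in> R \<and> dep' x = 0) \<or> (x \<notin> R \<and> E x (par' x) \<and> dep' x = Suc (dep' (par' x)))"
        proof
          fix x assume x: "x \<in> W"
          show "(x \<in> R \<and> dep' x = 0) \<or> (x \<notin> R \<and> E x (par' x) \<and> dep' x = Suc (dep' (par' x)))"
          proof (cases "x = l")
            case True then show ?thesis using lp pl by (simp add: dep'_def par'_def)
          next
            case False
            then have "x \<in> W - {l}" using x by simp
            then have "(x \<in> R \<and> dep x = 0) \<or> (x \<notin> R \<and> E' x (par x) \<and> dep x = Suc (dep (par x)))"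
              using pd(1) by blast
            then show ?thesis using False by (auto simp: dep'_def par'_def E'_def)
          qed
        qed
        have B: "\<forall>u w. E u w \<longrightarrow> (u \<notin> R \<and> par' u = w) \<or> (w \<notin> R \<and> par' w = u)"
        proof (intro allI impI)
          fix u w assume e: "E u w"
          show "(u \<notin> R \<and> par' u = w) \<or> (w \<notin> R \<and> par' w = u)"
          proof (cases "u = l \<or> w = l")
            case True
            then show ?thesis using e lp Esym by (auto simp: par'_def)
          next
            case False
            then have "E' u w" using e by (simp add: E'_def)
            then show ?thesis using pd(2) False by (auto simp: par'_def)
          qed
        qed
        show ?thesis using A B by blast
      qed
    qed
  qed
qed




fun chain :: "('a \<Rightarrow> 'a) \<Rightarrow> 'a set \<Rightarrow> nat \<Rightarrow> 'a \<Rightarrow> 'a list" where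
  "chain par N 0 x = [x]"
| "chain par N (Suc n) x = x # (if par x \<in> N then [par x] else chain par N n (par x))"

fun nd :: "'a set \<Rightarrow> ('a \<Rightarrow> 'a) \<Rightarrow> nat \<Rightarrow> 'a \<Rightarrow> nat" where
  "nd R c 0 x = 0"
| "nd R c (Suc n) x = (if x \<in> R then 0 else Suc (nd R c n (c x)))"

lemma chain_hd: "hd (chain par N n x) = x" by (cases n) auto
lemma chain_ne: "chain par N n x \<noteq> []" by (cases n) auto

lemma cons_adj:
  assumes "T \<noteq> []" "E x (hd T)" "\<forall>i < length T - 1. E (T!i) (T!(i+1))"
  shows "\<forall>i < length (x # T) - 1. E ((x#T)!i) ((x#T)!(i+1))"
proof (intro allI impI)
  fix i assume i: "i < length (x # T) - 1"
  show "E ((x#T)!i) ((x#T)!(i+1))"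
  proof (cases i)
    case 0 then show ?thesis using assms(1,2) by (simp add: hd_conv_nth)
  next
    case (Suc j) then show ?thesis using assms(3) i by simp
  qed
qed

lemma cons_int:
  assumes "T \<noteq> []" "hd T \<notin> N" "\<forall>i. 0 < i \<and> i < length T - 1 \<longrightarrow> T ! i \<notin> N"
  shows "\<forall>i. 0 < i \<and> i < length (x # T) - 1 \<longrightarrow> (x # T) ! i \<notin> N"
proof (intro allI impI)
  fix i assume i: "0 < i \<and> i < length (x # T) - 1"
  then obtain j where j: "i = Suc j" by (cases i) auto
  show "(x # T) ! i \<notin> N"
  proof (cases j)
    case 0 then show ?thesis using assms(1,2) j by (simp add: hd_conv_nth)
  next
    case (Suc k) then show ?thesis using assms(3) i j by auto
  qed
qed

locale rooted =
  fixes W :: "'a set" and E :: "'a \<Rightarrow> 'a \<Rightarrow> bool" and N R :: "'a set"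
    and par :: "'a \<Rightarrow> 'a" and dep :: "'a \<Rightarrow> nat"
  assumes Ein: "\<And>u v. E u v \<Longrightarrow> u \<in> W \<and> v \<in> W \<and> u \<noteq> v"
    and Esym: "\<And>u v. E u v \<longleftrightarrow> E v u"
    and RN: "R \<subseteq> N" and NW: "N \<subseteq> W"
    and pd: "\<And>v. v \<in> W \<Longrightarrow> (v \<in> R \<and> dep v = 0) \<or> (v \<notin> R \<and> E v (par v) \<and> dep v = Suc (dep (par v)))"
    and pe: "\<And>u v. E u v \<Longrightarrow> (u \<notin> R \<and> par u = v) \<or> (v \<notin> R \<and> par v = u)"
begin

lemma nonroot: "v \<in> W \<Longrightarrow> v \<notin> R \<Longrightarrow> E v (par v) \<and> dep v = Suc (dep (par v)) \<and> par v \<in> W"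
  using pd Ein by blast

lemma root_dep: "v \<in> W \<Longrightarrow> v \<in> R \<Longrightarrow> dep v = 0"
  using pd by blast

lemma chain_props:
  "x \<in> W \<Longrightarrow> x \<notin> R \<Longrightarrow> dep x \<le> n \<Longrightarrow>
    set (chain par N n x) \<subseteq> W \<and> distinct (chain par N n x) \<and>
    (\<forall>i < length (chain par N n x) - 1. E (chain par N n x ! i) (chain par N n x ! (i+1))) \<and>
    last (chain par N n x) \<in> N \<and> length (chain par N n x) \<ge> 2 \<and>
    (\<forall>i. 0 < i \<and> i < length (chain par N n x) - 1 \<longrightarrow> chain par N n x ! i \<notin> N) \<and>
    (\<forall>y \<in> set (tl (chain par N n x)). dep y < dep x) \<and>
    (\<forall>y \<in> set (chain par N n x). y = last (chain par N n x) \<or> (y \<notin> R \<and> par y \<in> set (chain par N n x)))"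
proof (induction n arbitrary: x)
  case 0
  then show ?case using nonroot by force
next
  case (Suc m)
  define p where "p = par x"
  have xp: "E x p" "dep x = Suc (dep p)" "p \<in> W" using nonroot Suc.prems p_def by auto
  have px: "p \<noteq> x" using xp(2) by auto
  show ?case
  proof (cases "p \<in> N")
    case True
    then have ch: "chain par N (Suc m) x = [x, p]" by (simp add: p_def)
    have a1: "\<forall>i < length [x,p] - 1. E ([x,p]!i) ([x,p]!(i+1))" using xp by simp
    have a2: "\<forall>i. 0 < i \<and> i < length [x,p] - 1 \<longrightarrow> [x,p] ! i \<notin> N" by simp
    have a3: "\<forall>y \<in> set [x,p]. y = last [x,p] \<or> (y \<notin> R \<and> par y \<in> set [x,p])"
      using Suc.prems p_def by auto
    show ?thesis unfolding ch using True xp px Suc.prems a1 a2 a3 by simp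
  next
    case False
    then have ch: "chain par N (Suc m) x = x # chain par N m p" by (simp add: p_def)
    have pR: "p \<notin> R" using False RN by blast
    have dm: "dep p \<le> m" using xp Suc.prems by simp
    note IH = Suc.IH[OF xp(3) pR dm]
    define T where "T = chain par N m p"
    have Tne: "T \<noteq> []" and hT: "hd T = p" by (simp_all add: T_def chain_ne chain_hd)
    have IH': "set T \<subseteq> W" "distinct T" "\<forall>i < length T - 1. E (T ! i) (T ! (i+1))"
      "last T \<in> N" "length T \<ge> 2" "\<forall>i. 0 < i \<and> i < length T - 1 \<longrightarrow> T ! i \<notin> N"
      "\<forall>y \<in> set (tl T). dep y < dep p"
      "\<forall>y \<in> set T. y = last T \<or> (y \<notin> R \<and> par y \<in> set T)"
      using IH unfolding T_def by auto
    have setT: "set T = insert p (set (tl T))" using Tne hT by (metis list.collapse list.simps(15))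
    have depT: "\<forall>y\<in>set T. dep y < dep x" using setT IH'(7) xp(2) by auto
    have "x \<notin> set T" using depT by blast
    moreover have "\<forall>i < length (x # T) - 1. E ((x#T)!i) ((x#T)!(i+1))"
      using cons_adj[OF Tne _ IH'(3)] hT xp(1) by simp
    moreover have "\<forall>i. 0 < i \<and> i < length (x # T) - 1 \<longrightarrow> (x # T) ! i \<notin> N"
      using cons_int[OF Tne _ IH'(6)] hT False by simp
    moreover have "\<forall>y \<in> set (x # T). y = last (x # T) \<or> (y \<notin> R \<and> par y \<in> set (x # T))"
      using IH'(8) Suc.prems hT Tne p_def hd_in_set[OF Tne] by auto
    ultimately show ?thesis unfolding ch T_def[symmetric]
      using IH'(1,2,4,5) Suc.prems(1) depT Tne by (intro conjI) (simp_all only: list.sel set_simps distinct.simps last_ConsR insert_subset, simp_all)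
  qed
qed

definition cp where "cp x = chain par N (dep x) x"
definition c where "c x = last (cp x)"

lemma chain_indep: "x \<in> W \<Longrightarrow> x \<notin> R \<Longrightarrow> dep x \<le> n \<Longrightarrow> chain par N n x = cp x"
proof (induction n arbitrary: x)
  case 0
  then show ?case using nonroot by force
next
  case (Suc m)
  define p where "p = par x"
  have xp: "E x p" "dep x = Suc (dep p)" "p \<in> W" using nonroot Suc.prems p_def by auto
  show ?case
  proof (cases "p \<in> N")
    case True
    then show ?thesis using xp(2) by (simp add: cp_def p_def)
  next
    case False
    have pR: "p \<notin> R" using False RN by blast
    have "chain par N m p = cp p" using Suc.IH[OF xp(3) pR] xp(2) Suc.prems by simp
    then show ?thesis using False xp(2) by (simp add: cp_def p_def)
  qed
qed

lemma cp_props: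
  assumes "x \<in> W" "x \<notin> R"
  shows "set (cp x) \<subseteq> W" "distinct (cp x)"
    "\<forall>i < length (cp x) - 1. E (cp x ! i) (cp x ! (i+1))"
    "c x \<in> N" "length (cp x) \<ge> 2"
    "\<forall>i. 0 < i \<and> i < length (cp x) - 1 \<longrightarrow> cp x ! i \<notin> N"
    "\<forall>y \<in> set (tl (cp x)). dep y < dep x"
    "\<forall>y \<in> set (cp x). y = c x \<or> (y \<notin> R \<and> par y \<in> set (cp x))"
    "hd (cp x) = x" "cp x \<noteq> []"
  using chain_props[OF assms le_refl] unfolding cp_def[symmetric] c_def
  by (auto simp: cp_def chain_hd chain_ne)

lemma c_par_N: "x \<in> W \<Longrightarrow> x \<notin> R \<Longrightarrow> par x \<in> N \<Longrightarrow> c x = par x"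
  using nonroot[of x] by (simp add: c_def cp_def)

lemma c_par_notN: "x \<in> W \<Longrightarrow> x \<notin> R \<Longrightarrow> par x \<notin> N \<Longrightarrow> c x = c (par x)"
proof -
  assume a: "x \<in> W" "x \<notin> R" "par x \<notin> N"
  have "par x \<notin> R" using a RN by blast
  then have "chain par N (dep (par x)) (par x) = cp (par x)" using nonroot[OF a(1,2)] by (simp add: cp_def)
  then show ?thesis using a nonroot[OF a(1,2)] by (simp add: c_def cp_def chain_ne)
qed

lemma c_dep: "x \<in> W \<Longrightarrow> x \<notin> R \<Longrightarrow> dep (c x) < dep x"
proof -
  assume a: "x \<in> W" "x \<notin> R"
  have "length (cp x) \<ge> 2" "cp x \<noteq> []" using cp_props[OF a] by auto
  have "tl (cp x) \<noteq> []" using \<open>length (cp x) \<ge> 2\<close> by (cases "cp x") auto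
  then have "c x \<in> set (tl (cp x))" unfolding c_def
    by (metis last_in_set last_tl)
  then show ?thesis using cp_props(7)[OF a] by blast
qed

lemma c_W: "x \<in> W \<Longrightarrow> x \<notin> R \<Longrightarrow> c x \<in> W"
  using cp_props(4) NW by blast

lemma c_rtc: "x \<in> W \<Longrightarrow> x \<notin> R \<Longrightarrow> E\<^sup>*\<^sup>* x (c x)"
proof -
  assume a: "x \<in> W" "x \<notin> R"
  have "E\<^sup>*\<^sup>* (cp x ! 0) (cp x ! (length (cp x) - 1))"
    using path_rtc[OF cp_props(3)[OF a]] cp_props(10)[OF a] by simp
  then show ?thesis using cp_props(9,10)[OF a] by (simp add: c_def hd_conv_nth last_conv_nth)
qed

lemma interior_chain:
  "x \<in> W \<Longrightarrow> x \<notin> R \<Longrightarrow> dep x \<le> n \<Longrightarrow> y \<in> set (chain par N n x) \<Longrightarrow> y \<noteq> x \<Longrightarrow>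
   y \<noteq> last (chain par N n x) \<Longrightarrow> y \<notin> N \<and> y \<in> W \<and> y \<notin> R \<and> c y = last (chain par N n x)"
proof (induction n arbitrary: x)
  case 0
  then show ?case by simp
next
  case (Suc m)
  define p where "p = par x"
  have xp: "E x p" "dep x = Suc (dep p)" "p \<in> W" using nonroot Suc.prems p_def by auto
  show ?case
  proof (cases "p \<in> N")
    case True
    then show ?thesis using Suc.prems by (simp add: p_def)
  next
    case False
    then have ch: "chain par N (Suc m) x = x # chain par N m p" by (simp add: p_def)
    have pR: "p \<notin> R" using False RN by blast
    have dm: "dep p \<le> m" using xp Suc.prems by simp
    have yT: "y \<in> set (chain par N m p)" "y \<noteq> last (chain par N m p)"
      using Suc.prems ch by (auto simp: chain_ne)
    show ?thesis
    proof (cases "y = p")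
      case True
      have "c p = last (chain par N m p)" using chain_indep[OF xp(3) pR dm] by (simp add: c_def)
      then show ?thesis using True False xp pR ch by (simp add: chain_ne)
    next
      case yp: False
      show ?thesis using Suc.IH[OF xp(3) pR dm yT(1) yp yT(2)] ch by (simp add: chain_ne)
    qed
  qed
qed

lemma interior:
  "x \<in> W \<Longrightarrow> x \<notin> R \<Longrightarrow> y \<in> set (cp x) \<Longrightarrow> y \<noteq> x \<Longrightarrow> y \<noteq> c x \<Longrightarrow> y \<notin> N \<and> y \<in> W \<and> y \<notin> R \<and> c y = c x"
  using interior_chain[of x "dep x" y] by (simp add: cp_def c_def)

lemma cp_second: "x \<in> W \<Longrightarrow> x \<notin> R \<Longrightarrow> cp x ! 0 = x \<and> cp x ! 1 = par x"
  using nonroot[of x] by (auto simp: cp_def chain_hd hd_conv_nth[symmetric] chain_ne)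

end



lemma pick3:
  assumes "finite A" "A \<noteq> {}"
  shows "\<exists>k<(3::nat). card A + 1 \<le> 4 * card {a\<in>A. (f a + k) mod 3 = 0}"
proof (rule ccontr)
  assume h: "\<not> ?thesis"
  define X where "X k = {a\<in>A. (f a + k) mod 3 = 0}" for k
  have "A \<subseteq> X 0 \<union> X 1 \<union> X 2"
  proof
    fix a assume a: "a \<in> A"
    have "(f a + 0) mod 3 = 0 \<or> (f a + 1) mod 3 = 0 \<or> (f a + 2) mod 3 = 0" by presburger
    then show "a \<in> X 0 \<union> X 1 \<union> X 2" using a by (auto simp: X_def)
  qed
  moreover have fX: "finite (X k)" for k using assms(1) by (simp add: X_def)
  ultimately have "card A \<le> card (X 0 \<union> X 1 \<union> X 2)" by (simp add: card_mono)
  also have "\<dots> \<le> card (X 0 \<union> X 1) + card (X 2)" by (rule card_Un_le)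
  also have "\<dots> \<le> card (X 0) + card (X 1) + card (X 2)" using card_Un_le[of "X 0" "X 1"] by simp
  finally have s: "card A \<le> card (X 0) + card (X 1) + card (X 2)" .
  have hk: "\<And>k. k < 3 \<Longrightarrow> \<not> (card A + 1 \<le> 4 * card (X k))" using h unfolding X_def by blast
  have "4 * card (X 0) < card A + 1" "4 * card (X 1) < card A + 1" "4 * card (X 2) < card A + 1"
    using hk[of 0] hk[of 1] hk[of 2] by simp_all
  moreover have "card A > 0" using assms by (simp add: card_gt_0_iff)
  ultimately show False using s by linarith
qed

context rooted
begin

definition g0 where "g0 x = nd R c (dep x) x"

lemma nd_indep: "x \<in> N \<Longrightarrow> dep x \<le> n \<Longrightarrow> nd R c n x = g0 x"
proof (induction n arbitrary: x rule: less_induct)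
  case (less n)
  show ?case
  proof (cases "x \<in> R")
    case True
    have "dep x = 0" using root_dep True NW less.prems by auto
    then show ?thesis using True by (cases n) (simp_all add: g0_def)
  next
    case False
    have xW: "x \<in> W" using less.prems NW by auto
    obtain d where d: "dep x = Suc d" using nonroot[OF xW False] by auto
    obtain m where m: "n = Suc m" using less.prems d by (cases n) auto
    have cN: "c x \<in> N" using cp_props(4)[OF xW False] .
    have cd: "dep (c x) \<le> d" using c_dep[OF xW False] d by simp
    have "nd R c m (c x) = g0 (c x)" using less.IH[of m "c x"] m cN cd d less.prems by simp
    moreover have "nd R c d (c x) = g0 (c x)" using less.IH[of d "c x"] d m less.prems cN cd by simp
    ultimately show ?thesis using False m d by (simp add: g0_def)
  qed
qed

lemma g0_step: "x \<in> N \<Longrightarrow> x \<notin> R \<Longrightarrow> g0 x = Suc (g0 (c x))"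
proof -
  assume a: "x \<in> N" "x \<notin> R"
  have xW: "x \<in> W" using a NW by auto
  obtain d where d: "dep x = Suc d" using nonroot[OF xW a(2)] by auto
  have "nd R c d (c x) = g0 (c x)"
    using nd_indep[of "c x" d] cp_props(4)[OF xW a(2)] c_dep[OF xW a(2)] d by simp
  then show ?thesis using a d by (simp add: g0_def)
qed

lemma cp_trans: "b \<in> N \<Longrightarrow> b \<notin> R \<Longrightarrow> is_path W E (cp b) \<and> length (cp b) \<ge> 2 \<and> hd (cp b) = b \<and>
   last (cp b) \<in> N \<and> (\<forall>i. 0 < i \<and> i < length (cp b) - 1 \<longrightarrow> cp b ! i \<notin> N)"
proof -
  assume a: "b \<in> N" "b \<notin> R"
  then have bW: "b \<in> W" using NW by auto
  show ?thesis using cp_props[OF bW a(2)] unfolding is_path_def c_def by auto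
qed

lemma ends: "b \<in> N \<Longrightarrow> b \<notin> R \<Longrightarrow> path_ends (cp b) = {b, c b}"
  using cp_props(9)[of b] NW by (auto simp: path_ends_def c_def)

lemma memN: "b \<in> N \<Longrightarrow> b \<notin> R \<Longrightarrow> w \<in> set (cp b) \<Longrightarrow> w \<in> N \<Longrightarrow> w = b \<or> w = c b"
  using interior[of b w] NW by auto

lemma disj:
  assumes "b \<in> N - R" "b' \<in> N - R" "{b, c b} \<inter> {b', c b'} = {}"
  shows "set (cp b) \<inter> set (cp b') = {}"
proof (rule ccontr)
  assume "set (cp b) \<inter> set (cp b') \<noteq> {}"
  then obtain w where w: "w \<in> set (cp b)" "w \<in> set (cp b')" by blast
  have bW: "b \<in> W" "b' \<in> W" using assms NW by auto
  show False
  proof (cases "w = b \<or> w = c b")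
    case True
    then have "w \<in> N" using assms cp_props(4)[of b] bW by auto
    then have "w = b' \<or> w = c b'" using memN[of b' w] w assms by auto
    then show False using True assms(3) by auto
  next
    case False
    then have i1: "w \<notin> N" "c w = c b" using interior[of b w] w bW assms by auto
    then have "w \<noteq> b'" "w \<noteq> c b'" using assms cp_props(4)[of b'] bW by auto
    then have "c w = c b'" using interior[of b' w] w bW assms by auto
    then show False using i1 assms(3) by auto
  qed
qed

lemma K:
  assumes bb: "b \<in> N - R" "b' \<in> N - R" and en: "{b, c b} \<inter> {b', c b'} = {}"
    and uv: "u \<in> set (cp b)" "v \<in> set (cp b')" "u \<notin> R" "par u = v"
    and gs: "\<forall>x\<in>N-R. g x = Suc (g (c x))"
  shows "g b = g b' + 1 \<or> g b = g b' + 2"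
proof -
  have bW: "b \<in> W" "b' \<in> W" using bb NW by auto
  have dj: "set (cp b) \<inter> set (cp b') = {}" using disj[OF bb en] .
  have "u = c b"
  proof (rule ccontr)
    assume "u \<noteq> c b"
    then have "par u \<in> set (cp b)" using cp_props(8)[of b] bW bb uv by auto
    then show False using uv dj by auto
  qed
  then have cbR: "c b \<notin> R" and cbN: "c b \<in> N" and par_cb: "par (c b) = v"
    using uv cp_props(4)[of b] bW bb by auto
  have cbW: "c b \<in> W" using cbN NW by auto
  have g1: "g b = Suc (g (c b))" using gs bb by auto
  have g2: "g (c b) = Suc (g (c (c b)))" using gs cbN cbR by auto
  have g3: "g b' = Suc (g (c b'))" using gs bb by auto
  consider "v = b'" | "v = c b'" | "v \<noteq> b' \<and> v \<noteq> c b'" by blast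
  then show ?thesis
  proof cases
    case 1
    then have "c (c b) = b'" using c_par_N[OF cbW cbR] par_cb bb by auto
    then show ?thesis using g1 g2 by simp
  next
    case 2
    then have "c (c b) = c b'" using c_par_N[OF cbW cbR] par_cb cp_props(4)[of b'] bW bb by auto
    then show ?thesis using g1 g2 g3 by simp
  next
    case 3
    then have vi: "v \<notin> N" "c v = c b'" using interior[of b' v] uv bW bb by auto
    then have "c (c b) = c b'" using c_par_notN[OF cbW cbR] par_cb by auto
    then show ?thesis using g1 g2 g3 by simp
  qed
qed

lemma normal:
  assumes B: "B \<subseteq> N - R" and gs: "\<forall>x\<in>N-R. g x = Suc (g (c x))" and gm: "\<forall>b\<in>B. g b mod 3 = 0"
  shows "normal_set E (cp ` B)"
proof -
  have modc: False if "b \<in> B" "b' \<in> B" "g b = g b' + 1 \<or> g b = g b' + 2" for b b'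
  proof -
    have "g b mod 3 = 0" "g b' mod 3 = 0" using gm that by auto
    then show False using that(3) by presburger
  qed
  have part1: "anticomplete E (set (cp b)) (set (cp b')) \<or> path_ends (cp b) \<inter> path_ends (cp b') \<noteq> {}"
    if bb: "b \<in> B" "b' \<in> B" for b b'
  proof (cases "{b, c b} \<inter> {b', c b'} = {}")
    case False
    then show ?thesis using ends[of b] ends[of b'] bb B by auto
  next
    case True
    have bN: "b \<in> N - R" "b' \<in> N - R" using bb B by auto
    have dj: "set (cp b) \<inter> set (cp b') = {}" using disj[OF bN True] .
    have "\<not> E u v" if uv: "u \<in> set (cp b)" "v \<in> set (cp b')" for u v
    proof
      assume e: "E u v"
      from pe[OF e] show False
      proof
        assume "u \<notin> R \<and> par u = v"
        then have "g b = g b' + 1 \<or> g b = g b' + 2" using K[OF bN True uv] gs by blast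
        then show False using modc bb by blast
      next
        assume "v \<notin> R \<and> par v = u"
        moreover have "{b', c b'} \<inter> {b, c b} = {}" using True by blast
        ultimately have "g b' = g b + 1 \<or> g b' = g b + 2" using K[OF bN(2,1) _ uv(2,1)] gs by blast
        then show False using modc bb by blast
      qed
    qed
    then show ?thesis using dj by (auto simp: anticomplete_def)
  qed
  have part2: "\<exists>e\<in>path_edges (cp b). \<forall>Q\<in>cp ` B. Q \<noteq> cp b \<longrightarrow> e \<notin> path_edges Q"
    if b: "b \<in> B" for b
  proof -
    have bN: "b \<in> N" "b \<notin> R" "b \<in> W" using b B NW by auto
    have l2: "length (cp b) \<ge> 2" using cp_props(5)[OF bN(3,2)] .
    have "{cp b ! 0, cp b ! (0 + 1)} \<in> path_edges (cp b)"
      unfolding path_edges_def using l2 by force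
    then have e: "{b, par b} \<in> path_edges (cp b)" using cp_second[OF bN(3,2)] by simp
    have "{b, par b} \<notin> path_edges (cp b')" if b': "b' \<in> B" "cp b' \<noteq> cp b" for b'
    proof
      assume "{b, par b} \<in> path_edges (cp b')"
      then obtain i where i: "i < length (cp b') - 1" "{cp b' ! i, cp b' ! (i + 1)} = {b, par b}"
        unfolding path_edges_def by auto
      then have "b \<in> set (cp b')"
        by (metis doubleton_eq_iff add_lessD1 less_diff_conv nth_mem)
      then have "b = b' \<or> b = c b'" using memN[of b' b] b' B bN by auto
      moreover have "b \<noteq> b'" using b' by auto
      ultimately have "b = c b'" by simp
      then have "g b' = g b + 1" using gs b' B by auto
      then show False using modc b b' by blast
    qed
    then show ?thesis using e by blast
  qed
  show ?thesis unfolding normal_set_def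
  proof (intro conjI ballI impI)
    fix P Q assume "P \<in> cp ` B" "Q \<in> cp ` B" "P \<noteq> Q"
    then show "anticomplete E (set P) (set Q) \<or> path_ends P \<inter> path_ends Q \<noteq> {}"
      using part1 by blast
  next
    fix P assume "P \<in> cp ` B"
    then show "\<exists>e\<in>path_edges P. \<forall>Q\<in>cp ` B. Q \<noteq> P \<longrightarrow> e \<notin> path_edges Q"
      using part2 by blast
  qed
qed

end



context rooted begin

definition rt where "rt x = (THE r. r \<in> R \<and> E\<^sup>*\<^sup>* x r)"

lemma rtc_sym: "E\<^sup>*\<^sup>* x y \<Longrightarrow> E\<^sup>*\<^sup>* y x"
proof -
  have "symp E" using Esym by (auto intro: sympI)
  then have "symp E\<^sup>*\<^sup>*" by (rule symp_rtranclp)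
  then show "E\<^sup>*\<^sup>* x y \<Longrightarrow> E\<^sup>*\<^sup>* y x" by (rule sympD)
qed

lemma selection:
  assumes finW: "finite W"
    and reachR: "\<And>v. v \<in> W \<Longrightarrow> \<exists>r\<in>R. E\<^sup>*\<^sup>* v r"
    and uniqR: "\<And>r r'. r \<in> R \<Longrightarrow> r' \<in> R \<Longrightarrow> E\<^sup>*\<^sup>* r r' \<Longrightarrow> r = r'"
    and two: "\<And>r. r \<in> R \<Longrightarrow> card {u \<in> N. E\<^sup>*\<^sup>* r u} \<ge> 2"
  shows "\<exists>B g. B \<subseteq> N - R \<and> card N \<le> 4 * card B \<and> (\<forall>x\<in>N-R. g x = Suc (g (c x))) \<and>
               (\<forall>b\<in>B. g b mod 3 = (0::nat))"
proof -
  have rt_eq: "rt x = r" if "r \<in> R" "E\<^sup>*\<^sup>* x r" for x r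
    unfolding rt_def
  proof (rule the_equality)
    show "r \<in> R \<and> E\<^sup>*\<^sup>* x r" using that by simp
    fix r' assume r': "r' \<in> R \<and> E\<^sup>*\<^sup>* x r'"
    then have "E\<^sup>*\<^sup>* r r'" using that rtc_sym by (meson rtranclp_trans)
    then show "r' = r" using uniqR that r' by metis
  qed
  have rt_in: "rt x \<in> R \<and> E\<^sup>*\<^sup>* x (rt x)" if "x \<in> W" for x
    using reachR[OF that] rt_eq by metis
  have rt_c: "rt (c x) = rt x" if "x \<in> N" "x \<notin> R" for x
  proof -
    have xW: "x \<in> W" using that NW by auto
    have "c x \<in> W" using c_W[OF xW that(2)] .
    then have r1: "rt (c x) \<in> R" "E\<^sup>*\<^sup>* (c x) (rt (c x))" using rt_in by auto
    then have "E\<^sup>*\<^sup>* x (rt (c x))" using c_rtc[OF xW that(2)] by (meson rtranclp_trans)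
    then show ?thesis using rt_eq r1 by metis
  qed
  define C where "C r = {b \<in> N. rt b = r}" for r
  have finN: "finite N" using finW NW finite_subset by blast
  have finR: "finite R" using finN RN finite_subset by blast
  have Cfin: "finite (C r)" for r using finN by (simp add: C_def)
  have rC: "r \<in> C r" if "r \<in> R" for r using that RN rt_eq[of r r] by (auto simp: C_def)
  have Ccard: "card (C r) \<ge> 2" if "r \<in> R" for r
  proof -
    have "{u \<in> N. E\<^sup>*\<^sup>* r u} \<subseteq> C r" using rt_eq that rtc_sym by (auto simp: C_def)
    then show ?thesis using two[OF that] card_mono[OF Cfin] by (meson order_trans)
  qed
  have CR: "b \<notin> R" if "b \<in> C r" "b \<noteq> r" for b r
    using that rt_eq[of b b] by (auto simp: C_def)
  have "\<forall>r\<in>R. \<exists>k<3. card (C r - {r}) + 1 \<le> 4 * card {a \<in> C r - {r}. (g0 a + k) mod 3 = 0}"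
  proof
    fix r assume r: "r \<in> R"
    have "C r - {r} \<noteq> {}"
    proof
      assume "C r - {r} = {}"
      then have "C r \<subseteq> {r}" by blast
      then have "card (C r) \<le> 1" using card_mono[of "{r}" "C r"] by simp
      then show False using Ccard[OF r] by simp
    qed
    then show "\<exists>k<3. card (C r - {r}) + 1 \<le> 4 * card {a \<in> C r - {r}. (g0 a + k) mod 3 = 0}"
      using pick3[of "C r - {r}" g0] Cfin by blast
  qed
  then obtain off where off: "\<forall>r\<in>R. off r < 3 \<and>
      card (C r - {r}) + 1 \<le> 4 * card {a \<in> C r - {r}. (g0 a + off r) mod 3 = 0}"
    using bchoice[of R "\<lambda>r k. k < 3 \<and> card (C r - {r}) + 1 \<le> 4 * card {a \<in> C r - {r}. (g0 a + k) mod 3 = 0}"]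
    by blast
  define g where "g x = g0 x + off (rt x)" for x
  define X where "X r = {a \<in> C r - {r}. (g0 a + off r) mod 3 = 0}" for r
  define B where "B = {b \<in> N - R. g b mod 3 = 0}"
  have gs: "\<forall>x\<in>N-R. g x = Suc (g (c x))" using g0_step rt_c by (auto simp: g_def)
  have N_un: "N = (\<Union>r\<in>R. C r)" using rt_in NW by (auto simp: C_def)
  have B_un: "B = (\<Union>r\<in>R. X r)"
  proof
    show "B \<subseteq> (\<Union>r\<in>R. X r)"
    proof
      fix b assume b: "b \<in> B"
      then have bN: "b \<in> N" "b \<notin> R" "b \<in> W" using NW by (auto simp: B_def)
      have "rt b \<in> R" using rt_in bN by auto
      moreover have "b \<in> X (rt b)" using b bN \<open>rt b \<in> R\<close> by (auto simp: X_def C_def B_def g_def)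
      ultimately show "b \<in> (\<Union>r\<in>R. X r)" by blast
    qed
  next
    show "(\<Union>r\<in>R. X r) \<subseteq> B"
    proof
      fix b assume "b \<in> (\<Union>r\<in>R. X r)"
      then obtain r where r: "r \<in> R" "b \<in> X r" by blast
      then have "b \<notin> R" using CR by (auto simp: X_def)
      then show "b \<in> B" using r by (auto simp: X_def C_def B_def g_def)
    qed
  qed
  have disjC: "\<forall>r\<in>R. \<forall>r'\<in>R. r \<noteq> r' \<longrightarrow> C r \<inter> C r' = {}" by (auto simp: C_def)
  have disjX: "\<forall>r\<in>R. \<forall>r'\<in>R. r \<noteq> r' \<longrightarrow> X r \<inter> X r' = {}" by (auto simp: C_def X_def)
  have Xfin: "finite (X r)" for r using Cfin by (simp add: X_def)
  have cN: "card N = (\<Sum>r\<in>R. card (C r))"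
    unfolding N_un using card_UN_disjoint[OF finR] Cfin disjC by blast
  have cB: "card B = (\<Sum>r\<in>R. card (X r))"
    unfolding B_un using card_UN_disjoint[OF finR] Xfin disjX by blast
  have "card (C r) \<le> 4 * card (X r)" if r: "r \<in> R" for r
  proof -
    have "card (C r - {r}) = card (C r) - 1" using rC[OF r] Cfin by simp
    then have "card (C r) = card (C r - {r}) + 1" using Ccard[OF r] by simp
    then show ?thesis using off r by (simp add: X_def)
  qed
  then have "card N \<le> (\<Sum>r\<in>R. 4 * card (X r))" unfolding cN by (rule sum_mono)
  also have "\<dots> = 4 * card B" unfolding cB by (simp add: sum_distrib_left)
  finally have "card N \<le> 4 * card B" .
  moreover have "B \<subseteq> N - R" by (auto simp: B_def)
  moreover have "\<forall>b\<in>B. g b mod 3 = 0" by (auto simp: B_def)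
  ultimately show ?thesis using gs by blast
qed

end



theorem mainTheorem11:
  fixes s :: nat and V Z :: "'a set" and adj :: "'a \<Rightarrow> 'a \<Rightarrow> bool"
  assumes "s \<ge> 1"
    and "plantation s V adj Z"
    and "\<forall>v \<in> V - Z. card {u \<in> attach V adj Z. (adjF adj Z)\<^sup>*\<^sup>* v u} \<ge> 2"
  shows "\<exists>S. (\<forall>P\<in>S. transition V adj Z P) \<and> normal_set adj S \<and>
             real (card S) \<ge> real (card (attach V adj Z)) / 4"
proof -
  define W where "W = V - Z"
  define E where "E = adjF adj Z"
  define N where "N = attach V adj Z"
  have sg: "simple_graph V adj" and ch: "cycle_hitting V adj Z"
    using assms(2) by (auto simp: plantation_def)
  have finW: "finite W" using sg by (auto simp: simple_graph_def W_def)
  have Ein: "\<And>u v. E u v \<Longrightarrow> u \<in> W \<and> v \<in> W \<and> u \<noteq> v"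
    using sg by (auto simp: simple_graph_def E_def adjF_def W_def)
  have Esym: "\<And>u v. E u v \<longleftrightarrow> E v u"
    using sg by (auto simp: simple_graph_def E_def adjF_def)
  have EW: "\<And>u v. u \<in> W \<Longrightarrow> v \<in> W \<Longrightarrow> E u v \<longleftrightarrow> adj u v"
    by (auto simp: E_def adjF_def W_def)
  have acyc: "\<forall>xs. \<not> is_cycle W E xs"
  proof (intro allI notI)
    fix xs assume cyc: "is_cycle W E xs"
    then have "is_cycle V adj xs" by (auto simp: is_cycle_def W_def E_def adjF_def)
    then have "set xs \<inter> Z \<noteq> {}" using ch by (auto simp: cycle_hitting_def)
    then show False using cyc by (auto simp: is_cycle_def W_def)
  qed
  have NW: "N \<subseteq> W" by (auto simp: N_def attach_def W_def)
  have rsym: "E\<^sup>*\<^sup>* x y \<Longrightarrow> E\<^sup>*\<^sup>* y x" for x y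
  proof -
    have "symp E" using Esym by (auto intro: sympI)
    then have "symp E\<^sup>*\<^sup>*" by (rule symp_rtranclp)
    then show "E\<^sup>*\<^sup>* x y \<Longrightarrow> E\<^sup>*\<^sup>* y x" by (rule sympD)
  qed
  have two: "\<And>v. v \<in> W \<Longrightarrow> card {u \<in> N. E\<^sup>*\<^sup>* v u} \<ge> 2"
    using assms(3) by (simp add: W_def N_def E_def)
  obtain f :: "'a \<Rightarrow> nat" and n where f: "f ` W = {i. i < n}" "inj_on f W"
    using finite_imp_inj_to_nat_seg[OF finW] by blast
  define R where "R = {v \<in> N. \<forall>u\<in>N. E\<^sup>*\<^sup>* v u \<longrightarrow> f v \<le> f u}"
  have RN: "R \<subseteq> N" by (auto simp: R_def)
  have finN: "finite N" using finW NW finite_subset by blast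
  have reachR: "\<exists>r\<in>R. E\<^sup>*\<^sup>* v r" if v: "v \<in> W" for v
  proof -
    define M where "M = {u \<in> N. E\<^sup>*\<^sup>* v u}"
    have Mfin: "finite M" using finN by (simp add: M_def)
    have "card M \<ge> 2" using two[OF v] by (simp add: M_def)
    then have Mne: "M \<noteq> {}" by auto
    have "Min (f ` M) \<in> f ` M" using Mfin Mne by simp
    then obtain r where r: "r \<in> M" "f r = Min (f ` M)" by auto
    have "f r \<le> f u" if "u \<in> M" for u using r that Mfin by simp
    then have "r \<in> R" using r by (auto simp: R_def M_def intro: rtranclp_trans)
    then show ?thesis using r by (auto simp: M_def)
  qed
  have uniqR: "r = r'" if "r \<in> R" "r' \<in> R" "E\<^sup>*\<^sup>* r r'" for r r'
  proof -
    have "f r \<le> f r'" using that by (auto simp: R_def)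
    moreover have "f r' \<le> f r" using that rsym by (auto simp: R_def)
    ultimately have "f r = f r'" by simp
    moreover have "r \<in> W" "r' \<in> W" using that RN NW by auto
    ultimately show ?thesis using f(2) by (auto dest: inj_onD)
  qed
  have h1: "\<forall>u v. E u v \<longrightarrow> u \<in> W \<and> v \<in> W \<and> u \<noteq> v" using Ein by blast
  have h2: "\<forall>u v. E u v \<longleftrightarrow> E v u" using Esym by blast
  have h4: "R \<subseteq> W" using RN NW by blast
  have h5: "\<forall>v\<in>W. \<exists>r\<in>R. E\<^sup>*\<^sup>* v r" using reachR by blast
  have h6: "\<forall>r\<in>R. \<forall>r'\<in>R. E\<^sup>*\<^sup>* r r' \<longrightarrow> r = r'" using uniqR by blast
  note fs = forest_struct[OF finW, THEN spec[where x=E], THEN spec[where x=R]]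
  note ex = mp[OF mp[OF mp[OF mp[OF mp[OF mp[OF fs h1] h2] acyc] h4] h5] h6]
  obtain par dep where pdp:
    "\<forall>v\<in>W. (v \<in> R \<and> dep v = (0::nat)) \<or> (v \<notin> R \<and> E v (par v) \<and> dep v = Suc (dep (par v)))"
    "\<forall>u v. E u v \<longrightarrow> (u \<notin> R \<and> par u = v) \<or> (v \<notin> R \<and> par v = u)"
    using ex by blast
  have loc: "rooted W E N R par dep"
  proof (unfold_locales)
    fix u v assume "E u v" then show "u \<in> W \<and> v \<in> W \<and> u \<noteq> v" using Ein by blast
  next
    fix u v show "E u v \<longleftrightarrow> E v u" by (rule Esym)
  next
    show "R \<subseteq> N" by (rule RN)
  next
    show "N \<subseteq> W" by (rule NW)
  next
    fix v assume "v \<in> W"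
    then show "(v \<in> R \<and> dep v = 0) \<or> (v \<notin> R \<and> E v (par v) \<and> dep v = Suc (dep (par v)))"
      using pdp(1) by blast
  next
    fix u v assume "E u v"
    then show "(u \<notin> R \<and> par u = v) \<or> (v \<notin> R \<and> par v = u)" using pdp(2) by blast
  qed
  interpret rooted W E N R par dep by (rule loc)
  have two': "\<And>r. r \<in> R \<Longrightarrow> card {u \<in> N. E\<^sup>*\<^sup>* r u} \<ge> 2" using two RN NW by blast
  obtain B and g :: "'a \<Rightarrow> nat" where Bg: "B \<subseteq> N - R" "card N \<le> 4 * card B"
    "\<forall>x\<in>N-R. g x = Suc (g (c x))" "\<forall>b\<in>B. g b mod 3 = 0"
    using selection[OF finW reachR uniqR two'] by blast
  define S where "S = cp ` B"
  have nS: "normal_set E S" using normal[OF Bg(1,3,4)] by (simp add: S_def)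
  have trS: "\<forall>P\<in>S. transition V adj Z P"
  proof
    fix P assume "P \<in> S"
    then obtain b where b: "b \<in> B" "P = cp b" by (auto simp: S_def)
    then have "b \<in> N" "b \<notin> R" using Bg(1) by auto
    then show "transition V adj Z P" using cp_trans[of b] b
      by (auto simp: transition_def W_def E_def N_def)
  qed
  have setW: "\<forall>P\<in>S. set P \<subseteq> W"
  proof
    fix P assume "P \<in> S"
    then obtain b where b: "b \<in> B" "P = cp b" by (auto simp: S_def)
    then have "b \<in> N" "b \<notin> R" using Bg(1) by auto
    then show "set P \<subseteq> W" using cp_trans[of b] b by (auto simp: is_path_def)
  qed
  have nS': "normal_set adj S"
  proof -
    have eqv: "anticomplete adj (set P) (set Q) \<longleftrightarrow> anticomplete E (set P) (set Q)" if "P \<in> S" "Q \<in> S" for P Q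
      using setW that EW unfolding anticomplete_def by blast
    show ?thesis unfolding normal_set_def
    proof (intro conjI ballI impI)
      fix P Q assume PQ: "P \<in> S" "Q \<in> S" "P \<noteq> Q"
      then have "anticomplete E (set P) (set Q) \<or> path_ends P \<inter> path_ends Q \<noteq> {}"
        using nS unfolding normal_set_def by blast
      then show "anticomplete adj (set P) (set Q) \<or> path_ends P \<inter> path_ends Q \<noteq> {}"
        using eqv[OF PQ(1,2)] by blast
    next
      fix P assume "P \<in> S"
      then show "\<exists>e\<in>path_edges P. \<forall>Q\<in>S. Q \<noteq> P \<longrightarrow> e \<notin> path_edges Q"
        using nS unfolding normal_set_def by blast
    qed
  qed
  have "inj_on cp B"
  proof (rule inj_onI)
    fix x y assume "x \<in> B" "y \<in> B" "cp x = cp y"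
    then show "x = y" using cp_trans[of x] cp_trans[of y] Bg(1) by auto
  qed
  then have "card S = card B" by (simp add: S_def card_image)
  then have "real (card N) / 4 \<le> real (card S)" using Bg(2) by simp
  then show ?thesis using trS nS' unfolding N_def by blast
qed


end
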